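(* Let $L\in\mathbb Z^+$ and let $\mathcal C$ be a linear $[n,k]$ MDS code over $F$ with $k<n$ and $k/n\ge 1-\frac1L$; let $H$ be an $(n-k)\times n$ parity-check matrix of $\mathcal C$. Then $\mathcal C$ is lightly-$L$-MDS if and only if $\det\big(M_{J_0,J_1,\dots,J_L}(H)\big)\neq0$ for every collection of $L+1$ pairwise disjoint subsets $J_0,J_1,\dots,J_L\subseteq\{1,\dots,n\}$ satisfying (S1) $|J_m|\le n-k$ for all $m\in\{0,\dots,L\}$, and (S2) $\sum_{m=0}^{L}|J_m|=L(n-k)$.
   Context: $F=\mathrm{GF}(q)$; $\mathsf w(\cdot)$ is Hamming weight. For a matrix $H$ with columns indexed by $\{1,\dots,n\}$ and $J\subseteq\{1,\dots,n\}$, $(H)_J$ denotes the submatrix of columns indexed by $J$. For subsets $J_0,\dots,J_L$, $M_{J_0,\dots,J_L}(H)$ is the block matrix with $L$ block rows and $L+1$ block columns, whose $m$-th block row ($m=1,\dots,L$) is $\big(-(H)_{J_0}\ \big|\ 0\ \cdots\ 0\ \big|\ (H)_{J_m}\ \big|\ 0\cdots 0\big)$, i.e., the first block column is $-(H)_{J_0}$ in every block row, and the block in block row $m$ and block column $m$ (block columns numbered $0,\dots,L$) is $(H)_{J_m}$, all other blocks being zero. Under (S2) it is square of order $L(n-k)$. A linear $[n,k,d]$ code $\mathcal C$ is lightly-$(\tau,L)$-list decodable ($L\in\mathbb Z^+$, nonnegative $\tau\in\frac{1}{L+1}\mathbb Z$) if there do not exist $L+1$ nonzero vectors $e_0,\dots,e_L\in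 F^n$, each of Hamming weight at most $d-1$, all in the same coset of $\mathcal C$, with pairwise disjoint supports and $\sum_{m=0}^L\mathsf w(e_m)\le(L+1)\tau$. The code is lightly-$L$-MDS if it is lightly-$\left(\frac{L(n-k)}{L+1},L\right)$-list decodable. *)

theory Defs
  imports "Jordan_Normal_Form.DL_Rank" "Jordan_Normal_Form.Determinant"
begin

(* Vectors of length n over a finite field 'a; coordinates indexed 0..n-1
   (the paper's 1..n shifted by one). *)

definition supp :: "nat \<Rightarrow> 'a::zero vec \<Rightarrow> nat set" where
  "supp n v = {i. i < n \<and> v $ i \<noteq> 0}"

definition hweight :: "nat \<Rightarrow> 'a::zero vec \<Rightarrow> nat" where
  "hweight n v = card (supp n v)"

definition code_of :: "nat \<Rightarrow> 'a::field mat \<Rightarrow> 'a vec set" where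
  "code_of n H = {c \<in> carrier_vec n. H *\<^sub>v c = 0\<^sub>v (dim_row H)}"

definition min_dist :: "nat \<Rightarrow> 'a::field vec set \<Rightarrow> nat" where
  "min_dist n C = Min {hweight n c | c. c \<in> C \<and> c \<noteq> 0\<^sub>v n}"

definition parity_check :: "nat \<Rightarrow> nat \<Rightarrow> 'a::field mat \<Rightarrow> 'a vec set \<Rightarrow> bool" where
  "parity_check n k H C \<longleftrightarrow> k \<le> n \<and> H \<in> carrier_mat (n - k) n
     \<and> vec_space.rank (n - k) H = n - k \<and> C = code_of n H"

definition is_MDS :: "nat \<Rightarrow> nat \<Rightarrow> 'a::field vec set \<Rightarrow> bool" where
  "is_MDS n k C \<longleftrightarrow> min_dist n C = n - k + 1"

definition lightly_list_decodable ::
  "nat \<Rightarrow> 'a::field vec set \<Rightarrow> real \<Rightarrow> nat \<Rightarrow> bool" where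
  "lightly_list_decodable n C \<tau> L \<longleftrightarrow>
     \<not> (\<exists>e :: nat \<Rightarrow> 'a vec.
          (\<forall>m\<le>L. e m \<in> carrier_vec n \<and> e m \<noteq> 0\<^sub>v n
                  \<and> hweight n (e m) \<le> min_dist n C - 1
                  \<and> e m - e 0 \<in> C)
        \<and> (\<forall>m\<le>L. \<forall>m'\<le>L. m \<noteq> m' \<longrightarrow> supp n (e m) \<inter> supp n (e m') = {})
        \<and> real (\<Sum>m\<le>L. hweight n (e m)) \<le> real (L + 1) * \<tau>)"

definition lightly_L_MDS :: "nat \<Rightarrow> nat \<Rightarrow> 'a::field vec set \<Rightarrow> nat \<Rightarrow> bool" where
  "lightly_L_MDS n k C L \<longleftrightarrow>
     lightly_list_decodable n C (real L * real (n - k) / real (L + 1)) L"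

definition blk_off :: "(nat \<Rightarrow> nat set) \<Rightarrow> nat \<Rightarrow> nat" where
  "blk_off J m = (\<Sum>t<m. card (J t))"

definition col_sub :: "'a mat \<Rightarrow> nat set \<Rightarrow> 'a mat" where
  "col_sub H J = mat (dim_row H) (card J) (\<lambda>(i, j). H $$ (i, sorted_list_of_set J ! j))"

(* M_{J_0,...,J_L}(H): L block rows (each of height r = dim_row H), L+1 block columns;
   block row m (m = 1..L) is ( -(H)_{J_0} | 0 ... 0 | (H)_{J_m} | 0 ... 0 ) *)
definition M_mat :: "'a::field mat \<Rightarrow> nat \<Rightarrow> (nat \<Rightarrow> nat set) \<Rightarrow> 'a mat" where
  "M_mat H L J = (let r = dim_row H in
     mat (L * r) (blk_off J (Suc L))
       (\<lambda>(a, c). let m = a div r + 1; i = a mod r in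
          if c < blk_off J 1 then - (col_sub H (J 0) $$ (i, c))
          else if blk_off J m \<le> c \<and> c < blk_off J (Suc m)
               then col_sub H (J m) $$ (i, c - blk_off J m)
          else 0))"

end

theory Submission
  imports Defs
begin


definition emb :: "nat \<Rightarrow> nat set \<Rightarrow> nat \<Rightarrow> 'a::zero vec \<Rightarrow> 'a vec" where
  "emb n J off x = vec n (\<lambda>j. if j \<in> J then x $ (off + inv_into {..<card J} ((!) (sorted_list_of_set J)) j) else 0)"

lemma bij_sl: "finite J \<Longrightarrow> bij_betw ((!) (sorted_list_of_set J)) {..<card J} J"
  by (rule bij_betw_nth) auto

lemma mult_emb: assumes H: "H \<in> carrier_mat r n" and J: "J \<subseteq> {0..<n}" and i: "i < r"
  shows "(H *\<^sub>v emb n J off x) $ i = (\<Sum>t<card J. H $$ (i, sorted_list_of_set J ! t) * x $ (off + t))"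
proof -
  have fJ: "finite J" using J finite_subset by blast
  have b: "bij_betw ((!) (sorted_list_of_set J)) {..<card J} J" using bij_sl fJ by blast
  have "(H *\<^sub>v emb n J off x) $ i = (\<Sum>j\<in>{0..<n}. H $$ (i,j) * emb n J off x $ j)"
    using H i by (simp add: scalar_prod_def emb_def)
  also have "\<dots> = (\<Sum>j\<in>{0..<n}. if j \<in> J then H $$ (i,j) * x $ (off + inv_into {..<card J} ((!) (sorted_list_of_set J)) j) else 0)"
    by (rule sum.cong) (auto simp: emb_def)
  also have "\<dots> = (\<Sum>j\<in>J. H $$ (i,j) * x $ (off + inv_into {..<card J} ((!) (sorted_list_of_set J)) j))"
    using J by (simp add: sum.If_cases Int_absorb1)
  also have "\<dots> = (\<Sum>t<card J. H $$ (i, sorted_list_of_set J ! t) * x $ (off + inv_into {..<card J} ((!) (sorted_list_of_set J)) (sorted_list_of_set J ! t)))"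
    using sum.reindex_bij_betw[OF b, symmetric] by blast
  also have "\<dots> = (\<Sum>t<card J. H $$ (i, sorted_list_of_set J ! t) * x $ (off + t))"
    by (rule sum.cong) (use b in \<open>auto simp: bij_betw_def inv_into_f_f\<close>)
  finally show ?thesis .
qed


lemma emb_nth: assumes "J \<subseteq> {0..<n}" "t < card J"
  shows "emb n J off x $ (sorted_list_of_set J ! t) = x $ (off + t)"
        "sorted_list_of_set J ! t \<in> J"
proof -
  have fJ: "finite J" using assms finite_subset by blast
  have b: "bij_betw ((!) (sorted_list_of_set J)) {..<card J} J" using bij_sl fJ by blast
  show j: "sorted_list_of_set J ! t \<in> J" using b assms bij_betwE by blast
  then have "sorted_list_of_set J ! t < n" using assms by auto
  then show "emb n J off x $ (sorted_list_of_set J ! t) = x $ (off + t)"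
    using j b assms by (simp add: emb_def bij_betw_def inv_into_f_f)
qed

lemma blk_off_Suc: "blk_off J (Suc m) = blk_off J m + card (J m)"
  by (simp add: blk_off_def)

lemma blk_off_mono: "m \<le> m' \<Longrightarrow> blk_off J m \<le> blk_off J m'"
  unfolding blk_off_def by (rule sum_mono2) auto

lemma M_row: assumes H: "H \<in> carrier_mat r n" and r: "r > 0"
  and J: "\<forall>m\<le>L. J m \<subseteq> {0..<n}" and x: "x \<in> carrier_vec (blk_off J (Suc L))"
  and a: "a < L * r"
shows "(M_mat H L J *\<^sub>v x) $ a = (H *\<^sub>v emb n (J (a div r + 1)) (blk_off J (a div r + 1)) x) $ (a mod r) - (H *\<^sub>v emb n (J 0) 0 x) $ (a mod r)"
proof -
  define m where "m = a div r + 1"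
  define i where "i = a mod r"
  define N where "N = blk_off J (Suc L)"
  define s0 where "s0 = sorted_list_of_set (J 0)"
  define sm where "sm = sorted_list_of_set (J m)"
  have i: "i < r" using r by (simp add: i_def)
  have mL: "m \<le> L" "1 \<le> m" using a r unfolding m_def
    by (auto simp: less_mult_imp_div_less Suc_le_eq)
  have o1: "blk_off J 1 \<le> blk_off J m" using mL blk_off_mono by blast
  have oN: "blk_off J (Suc m) \<le> N" using mL blk_off_mono N_def by simp
  have o10: "blk_off J 1 = card (J 0)" by (simp add: blk_off_def)
  have dr: "dim_row H = r" using H by simp
  have "(M_mat H L J *\<^sub>v x) $ a = (\<Sum>c\<in>{0..<N}. M_mat H L J $$ (a, c) * x $ c)"
    using a x dr by (simp add: scalar_prod_def M_mat_def N_def Let_def)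
  also have "\<dots> = (\<Sum>c\<in>{0..<N}. (if c < blk_off J 1 then - (H $$ (i, s0 ! c) * x $ c) else 0)
      + (if c \<in> {blk_off J m..<blk_off J (Suc m)} then H $$ (i, sm ! (c - blk_off J m)) * x $ c else 0))"
  proof (rule sum.cong[OF refl])
    fix c assume c: "c \<in> {0..<N}"
    show "M_mat H L J $$ (a, c) * x $ c = (if c < blk_off J 1 then - (H $$ (i, s0 ! c) * x $ c) else 0)
      + (if c \<in> {blk_off J m..<blk_off J (Suc m)} then H $$ (i, sm ! (c - blk_off J m)) * x $ c else 0)"
      using c a o1 dr i o10 unfolding M_mat_def Let_def
      by (auto simp: N_def m_def i_def s0_def sm_def col_sub_def blk_off_Suc)
  qed
  also have "\<dots> = - (\<Sum>c\<in>{0..<card (J 0)}. H $$ (i, s0 ! c) * x $ c)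
     + (\<Sum>c\<in>{blk_off J m..<blk_off J (Suc m)}. H $$ (i, sm ! (c - blk_off J m)) * x $ c)"
  proof -
    have "{0..<N} \<inter> {c. c < blk_off J 1} = {0..<card (J 0)}" using o1 oN o10 blk_off_mono[of m "Suc m" J] by auto
    moreover have "{0..<N} \<inter> {c. c \<in> {blk_off J m..<blk_off J (Suc m)}} = {blk_off J m..<blk_off J (Suc m)}"
      using oN by auto
    ultimately show ?thesis
      by (simp add: sum.distrib sum.If_cases sum_negf)
  qed
  also have "(\<Sum>c\<in>{blk_off J m..<blk_off J (Suc m)}. H $$ (i, sm ! (c - blk_off J m)) * x $ c)
     = (\<Sum>t<card (J m). H $$ (i, sm ! t) * x $ (blk_off J m + t))"
  proof -
    have "{blk_off J m..<blk_off J (Suc m)} = (\<lambda>t. blk_off J m + t) ` {..<card (J m)}"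
      proof (auto simp: blk_off_Suc image_iff)
      fix c assume "blk_off J m \<le> c" "c < blk_off J m + card (J m)"
      then show "\<exists>t\<in>{..<card (J m)}. c = blk_off J m + t" by (intro bexI[of _ "c - blk_off J m"]) auto
    qed
    then show ?thesis by (simp add: sum.reindex)
  qed
  finally show ?thesis
    using mult_emb[OF H _ i, of "J m" "blk_off J m" x] mult_emb[OF H _ i, of "J 0" 0 x] J mL
    by (simp add: m_def i_def s0_def sm_def atLeast0LessThan)
qed

lemma supp_sub: "supp n v \<subseteq> {0..<n}" by (auto simp: supp_def)

lemma hweight_le: "hweight n v \<le> n"
  unfolding hweight_def using card_mono[OF _ supp_sub, of n v] by simp

lemma code_weight: assumes "is_MDS n k C" "c \<in> C" "c \<noteq> 0\<^sub>v n"
  shows "n - k + 1 \<le> hweight n c"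
proof -
  have fin: "finite {hweight n c | c. c \<in> C \<and> c \<noteq> 0\<^sub>v n}"
    by (rule finite_subset[of _ "{..n}"]) (auto simp: hweight_le)
  have "min_dist n C \<le> hweight n c"
    unfolding min_dist_def using assms(2,3) by (intro Min_le[OF fin]) auto
  then show ?thesis using assms(1) by (simp add: is_MDS_def)
qed

lemma supp_emb: "J \<subseteq> {0..<n} \<Longrightarrow> supp n (emb n J off x) \<subseteq> J"
  by (auto simp: supp_def emb_def split: if_splits)

lemma hweight_emb: "J \<subseteq> {0..<n} \<Longrightarrow> hweight n (emb n J off x) \<le> card J"
  unfolding hweight_def using supp_emb[of J n off x]
  by (intro card_mono) (auto intro: finite_subset)

lemma find_block: "c < blk_off J K \<Longrightarrow> \<exists>m<K. blk_off J m \<le> c \<and> c < blk_off J (Suc m)"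
proof (induction K)
  case 0 then show ?case by (simp add: blk_off_def)
next
  case (Suc K)
  show ?case
  proof (cases "c < blk_off J K")
    case True then show ?thesis using Suc.IH by (meson less_SucI)
  next
    case False then show ?thesis using Suc.prems by (intro exI[of _ K]) auto
  qed
qed

lemma extend:
  assumes "\<forall>m\<le>L. S m \<subseteq> {0..<n}" "\<forall>m\<le>L. \<forall>m'\<le>L. m\<noteq>m' \<longrightarrow> S m \<inter> S m' = {}"
    "\<forall>m\<le>L. card (S m) \<le> r" "(\<Sum>m\<le>L. card (S m)) \<le> T" "T \<le> n" "T \<le> (L+1)*r"
  shows "\<exists>J. (\<forall>m\<le>L. S m \<subseteq> J m) \<and> (\<forall>m\<le>L. J m \<subseteq> {0..<n})
     \<and> (\<forall>m\<le>L. \<forall>m'\<le>L. m\<noteq>m' \<longrightarrow> J m \<inter> J m' = {})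
     \<and> (\<forall>m\<le>L. card (J m) \<le> r) \<and> (\<Sum>m\<le>L. card (J m)) = T"
  using assms
proof (induction "T - (\<Sum>m\<le>L. card (S m))" arbitrary: S)
  case 0
  then show ?case by (intro exI[of _ S]) auto
next
  case (Suc d)
  have fS: "\<forall>m\<le>L. finite (S m)" using Suc.prems(1) finite_subset by blast
  have cU: "card (\<Union>m\<in>{..L}. S m) = (\<Sum>m\<le>L. card (S m))"
    using fS Suc.prems(2) by (intro card_UN_disjoint) auto
  have lt: "(\<Sum>m\<le>L. card (S m)) < T" using Suc.hyps(2) by linarith
  obtain j where j: "j \<in> {0..<n}" "j \<notin> (\<Union>m\<in>{..L}. S m)"
  proof -
    have "\<not> {0..<n} \<subseteq> (\<Union>m\<in>{..L}. S m)"
    proof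
      assume "{0..<n} \<subseteq> (\<Union>m\<in>{..L}. S m)"
      then have "card {0..<n} \<le> card (\<Union>m\<in>{..L}. S m)" using fS by (intro card_mono) auto
      then show False using cU lt Suc.prems(5) by simp
    qed
    then show ?thesis using that by blast
  qed
  obtain m0 where m0: "m0 \<le> L" "card (S m0) < r"
  proof -
    have "\<exists>m0\<le>L. card (S m0) < r"
    proof (rule ccontr)
      assume "\<not> ?thesis"
      then have "(\<Sum>m\<le>L. r) \<le> (\<Sum>m\<le>L. card (S m))" by (intro sum_mono) auto
      then show False using lt Suc.prems(6) by simp
    qed
    then show ?thesis using that by blast
  qed
  define S' where "S' = S(m0 := insert j (S m0))"
  have cS': "\<forall>m\<le>L. card (S' m) = card (S m) + (if m = m0 then 1 else 0)"
    using j fS m0 by (auto simp: S'_def)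
  have sS': "(\<Sum>m\<le>L. card (S' m)) = (\<Sum>m\<le>L. card (S m)) + 1"
    using cS' m0 by (simp add: sum.distrib)
  have "\<exists>J. (\<forall>m\<le>L. S' m \<subseteq> J m) \<and> (\<forall>m\<le>L. J m \<subseteq> {0..<n})
     \<and> (\<forall>m\<le>L. \<forall>m'\<le>L. m\<noteq>m' \<longrightarrow> J m \<inter> J m' = {})
     \<and> (\<forall>m\<le>L. card (J m) \<le> r) \<and> (\<Sum>m\<le>L. card (J m)) = T"
  proof (rule Suc.hyps(1))
    show "d = T - (\<Sum>m\<le>L. card (S' m))" using sS' Suc.hyps(2) by simp
    show "\<forall>m\<le>L. S' m \<subseteq> {0..<n}" using Suc.prems(1) j by (auto simp: S'_def)
    show "\<forall>m\<le>L. \<forall>m'\<le>L. m\<noteq>m' \<longrightarrow> S' m \<inter> S' m' = {}" using Suc.prems(2) j m0 by (auto simp: S'_def)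
    show "\<forall>m\<le>L. card (S' m) \<le> r" using cS' Suc.prems(3) m0 by auto
    show "(\<Sum>m\<le>L. card (S' m)) \<le> T" using sS' lt by simp
  qed (use Suc.prems in auto)
  then obtain J where J: "\<forall>m\<le>L. S' m \<subseteq> J m" "\<forall>m\<le>L. J m \<subseteq> {0..<n}"
     "\<forall>m\<le>L. \<forall>m'\<le>L. m\<noteq>m' \<longrightarrow> J m \<inter> J m' = {}"
     "\<forall>m\<le>L. card (J m) \<le> r" "(\<Sum>m\<le>L. card (J m)) = T" by blast
  have "\<forall>m\<le>L. S m \<subseteq> J m"
  proof (intro allI impI)
    fix m assume "m \<le> L"
    then have "S' m \<subseteq> J m" using J(1) by blast
    moreover have "S m \<subseteq> S' m" by (auto simp: S'_def)
    ultimately show "S m \<subseteq> J m" by blast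
  qed
  then show ?case using J by blast
qed

definition gather :: "nat \<Rightarrow> (nat \<Rightarrow> nat set) \<Rightarrow> (nat \<Rightarrow> 'a::comm_monoid_add vec) \<Rightarrow> 'a vec" where
 "gather L J e = vec (blk_off J (Suc L)) (\<lambda>c. \<Sum>m\<le>L. if blk_off J m \<le> c \<and> c < blk_off J (Suc m)
      then e m $ (sorted_list_of_set (J m) ! (c - blk_off J m)) else 0)"

lemma gather_at: assumes "m \<le> L" "t < card (J m)"
  shows "gather L J e $ (blk_off J m + t) = e m $ (sorted_list_of_set (J m) ! t)"
proof -
  let ?c = "blk_off J m + t"
  have c1: "?c < blk_off J (Suc m)" using assms by (simp add: blk_off_Suc)
  have c2: "?c < blk_off J (Suc L)" using c1 blk_off_mono[of "Suc m" "Suc L" J] assms by simp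
  have z: "\<forall>m'\<in>{..L} - {m}. \<not> (blk_off J m' \<le> ?c \<and> ?c < blk_off J (Suc m'))"
  proof
    fix m' assume m': "m' \<in> {..L} - {m}"
    show "\<not> (blk_off J m' \<le> ?c \<and> ?c < blk_off J (Suc m'))"
    proof (cases "m' < m")
      case True then show ?thesis using blk_off_mono[of "Suc m'" m J] by auto
    next
      case False then have "Suc m \<le> m'" using m' by auto
      then show ?thesis using blk_off_mono[of "Suc m" m' J] c1 by auto
    qed
  qed
  have "gather L J e $ ?c = (\<Sum>m'\<in>{..L}. if blk_off J m' \<le> ?c \<and> ?c < blk_off J (Suc m')
      then e m' $ (sorted_list_of_set (J m') ! (?c - blk_off J m')) else 0)"
    using c2 by (simp add: gather_def)
  also have "\<dots> = (if blk_off J m \<le> ?c \<and> ?c < blk_off J (Suc m)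
      then e m $ (sorted_list_of_set (J m) ! (?c - blk_off J m)) else 0)"
  proof -
    have "(\<Sum>m'\<in>{..L} - {m}. if blk_off J m' \<le> ?c \<and> ?c < blk_off J (Suc m')
      then e m' $ (sorted_list_of_set (J m') ! (?c - blk_off J m')) else 0) = 0"
      using z by (intro sum.neutral) auto
    then show ?thesis using assms by (subst sum.remove[of _ m]) auto
  qed
  also have "\<dots> = e m $ (sorted_list_of_set (J m) ! t)" using c1 by simp
  finally show ?thesis .
qed

lemma emb_gather: assumes "m \<le> L" "J m \<subseteq> {0..<n}" "e m \<in> carrier_vec n" "supp n (e m) \<subseteq> J m"
  shows "emb n (J m) (blk_off J m) (gather L J e) = e m"
proof (rule eq_vecI)
  show "dim_vec (emb n (J m) (blk_off J m) (gather L J e)) = dim_vec (e m)" using assms by (simp add: emb_def)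
  fix j assume "j < dim_vec (e m)"
  then have j: "j < n" using assms by simp
  show "emb n (J m) (blk_off J m) (gather L J e) $ j = e m $ j"
  proof (cases "j \<in> J m")
    case True
    have fJ: "finite (J m)" using assms finite_subset by blast
    have b: "bij_betw ((!) (sorted_list_of_set (J m))) {..<card (J m)} (J m)" using bij_sl fJ by blast
    define t where "t = inv_into {..<card (J m)} ((!) (sorted_list_of_set (J m))) j"
    have t: "t < card (J m)" "sorted_list_of_set (J m) ! t = j"
    proof -
      have jj: "j \<in> (!) (sorted_list_of_set (J m)) ` {..<card (J m)}" using True b by (simp add: bij_betw_def)
      show "t < card (J m)" using inv_into_into[OF jj] unfolding t_def by simp
      show "sorted_list_of_set (J m) ! t = j" using f_inv_into_f[OF jj] unfolding t_def by simp
    qed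
    have "emb n (J m) (blk_off J m) (gather L J e) $ j = gather L J e $ (blk_off J m + t)"
      using emb_nth(1)[OF assms(2) t(1)] t by simp
    then show ?thesis using gather_at[of m L t J e] assms(1) t by simp
  next
    case False
    then have "e m $ j = 0" using assms(4) j by (auto simp: supp_def)
    then show ?thesis using False j by (simp add: emb_def)
  qed
qed



lemma vec_minus_eq0: assumes "(u::'a::ab_group_add vec) \<in> carrier_vec r" "w \<in> carrier_vec r" "u - w = 0\<^sub>v r"
  shows "u = w"
proof (rule eq_vecI)
  fix i assume i: "i < dim_vec w"
  have "(u - w) $ i = 0" using assms i by simp
  moreover have "(u - w) $ i = u $ i - w $ i" using assms(2) i by simp
  ultimately show "u $ i = w $ i" by simp
qed (use assms in simp)

lemma blk_off_0[simp]: "blk_off J 0 = 0" by (simp add: blk_off_def)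

lemma blk_off_total: "blk_off J (Suc L) = (\<Sum>m\<le>L. card (J m))"
  by (simp add: blk_off_def lessThan_Suc_atMost)

theorem mainTheorem13:
  fixes H :: "'a::{finite, field} mat" and C :: "'a vec set"
    and n k L :: nat
  assumes "L \<ge> 1"
    and "k < n"
    and "real k / real n \<ge> 1 - 1 / real L"
    and "parity_check n k H C"
    and "is_MDS n k C"
  shows "lightly_L_MDS n k C L \<longleftrightarrow>
    (\<forall>J :: nat \<Rightarrow> nat set.
       (\<forall>m\<le>L. J m \<subseteq> {0..<n})
     \<and> (\<forall>m\<le>L. \<forall>m'\<le>L. m \<noteq> m' \<longrightarrow> J m \<inter> J m' = {})
     \<and> (\<forall>m\<le>L. card (J m) \<le> n - k)
     \<and> (\<Sum>m\<le>L. card (J m)) = L * (n - k)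
     \<longrightarrow> det (M_mat H L J) \<noteq> 0)"
proof -
  define r where "r = n - k"
  have r0: "r > 0" using assms(2) r_def by simp
  have Hc: "H \<in> carrier_mat r n" and Cdef: "C = code_of n H"
    using assms(4) by (auto simp: parity_check_def r_def)
  have md: "min_dist n C = r + 1" using assms(5) by (simp add: is_MDS_def r_def)
  have Lrn: "L * r \<le> n"
  proof -
    have n0: "real n > 0" using assms(2) by simp
    have L0: "real L > 0" using assms(1) by simp
    have "(1 - 1 / real L) * (real L * real n) \<le> real k / real n * (real L * real n)"
      using assms(3) n0 L0 by (intro mult_right_mono) auto
    moreover have "(1 - 1 / real L) * (real L * real n) = real L * real n - real n" using L0 by (simp add: field_simps)
    moreover have "real k / real n * (real L * real n) = real L * real k" using n0 by (simp add: field_simps)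
    ultimately have "real L * real n - real n \<le> real L * real k" by simp
    moreover have "real (L * r) = real L * real n - real L * real k"
      using assms(2) by (simp add: r_def of_nat_diff algebra_simps)
    ultimately have "real (L * r) \<le> real n" by simp
    then show ?thesis by linarith
  qed
  have inC: "\<And>v. v \<in> carrier_vec n \<Longrightarrow> v \<in> C \<longleftrightarrow> H *\<^sub>v v = 0\<^sub>v r"
    using Hc by (simp add: Cdef code_of_def)
  have thr: "real (L + 1) * (real L * real (n - k) / real (L + 1)) = real (L * r)"
    by (simp add: r_def)
  have Mc: "M_mat H L J \<in> carrier_mat (L * r) (L * r)" if "(\<Sum>m\<le>L. card (J m)) = L * r" for J
    using that Hc by (simp add: M_mat_def blk_off_total)
  show ?thesis
  proof
    assume LM: "lightly_L_MDS n k C L"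
    show "\<forall>J :: nat \<Rightarrow> nat set.
       (\<forall>m\<le>L. J m \<subseteq> {0..<n})
     \<and> (\<forall>m\<le>L. \<forall>m'\<le>L. m \<noteq> m' \<longrightarrow> J m \<inter> J m' = {})
     \<and> (\<forall>m\<le>L. card (J m) \<le> n - k)
     \<and> (\<Sum>m\<le>L. card (J m)) = L * (n - k)
     \<longrightarrow> det (M_mat H L J) \<noteq> 0"
    proof (intro allI impI notI)
      fix J :: "nat \<Rightarrow> nat set"
      assume JJ: "(\<forall>m\<le>L. J m \<subseteq> {0..<n})
     \<and> (\<forall>m\<le>L. \<forall>m'\<le>L. m \<noteq> m' \<longrightarrow> J m \<inter> J m' = {})
     \<and> (\<forall>m\<le>L. card (J m) \<le> n - k)
     \<and> (\<Sum>m\<le>L. card (J m)) = L * (n - k)"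
      assume d0: "det (M_mat H L J) = 0"
      have Jsub: "\<forall>m\<le>L. J m \<subseteq> {0..<n}" and Jdis: "\<forall>m\<le>L. \<forall>m'\<le>L. m \<noteq> m' \<longrightarrow> J m \<inter> J m' = {}"
        and Jc: "\<forall>m\<le>L. card (J m) \<le> r" and Js: "(\<Sum>m\<le>L. card (J m)) = L * r"
        using JJ by (auto simp: r_def)
      obtain x where x: "x \<in> carrier_vec (L * r)" "x \<noteq> 0\<^sub>v (L * r)" "M_mat H L J *\<^sub>v x = 0\<^sub>v (L * r)"
        using det_0_iff_vec_prod_zero_field[OF Mc[OF Js]] d0 by blast
      have xc: "x \<in> carrier_vec (blk_off J (Suc L))" using x(1) Js by (simp add: blk_off_total)
      define e where "e m = emb n (J m) (blk_off J m) x" for m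
      have ec: "e m \<in> carrier_vec n" for m by (simp add: e_def emb_def)
      have HE: "\<forall>m\<le>L. H *\<^sub>v e m = H *\<^sub>v e 0"
      proof (intro allI impI)
        fix m assume mL: "m \<le> L"
        show "H *\<^sub>v e m = H *\<^sub>v e 0"
        proof (cases "m = 0")
          case False
          show ?thesis
          proof (rule eq_vecI)
            show "dim_vec (H *\<^sub>v e m) = dim_vec (H *\<^sub>v e 0)" by simp
            fix i assume "i < dim_vec (H *\<^sub>v e 0)"
            then have i: "i < r" using Hc by simp
            define a where "a = (m - 1) * r + i"
            have adiv: "a div r = m - 1" "a mod r = i"
            proof -
              have "a = i + (m - 1) * r" by (simp add: a_def)
              then show "a div r = m - 1" "a mod r = i" using i r0 by simp_all
            qed
            have aL: "a < L * r"
            proof -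
              have "a < (m - 1) * r + r" using i a_def by simp
              also have "\<dots> = m * r" using False by (cases m) auto
              also have "\<dots> \<le> L * r" using mL by simp
              finally show ?thesis .
            qed
            have "(M_mat H L J *\<^sub>v x) $ a = 0" using x(3) aL by simp
            moreover have am: "a div r + 1 = m" using adiv False by simp
            moreover have "(M_mat H L J *\<^sub>v x) $ a = (H *\<^sub>v e m) $ i - (H *\<^sub>v e 0) $ i"
              using M_row[OF Hc r0 Jsub xc aL] by (simp only: am adiv(2) e_def blk_off_0)
            ultimately have "(H *\<^sub>v e m) $ i - (H *\<^sub>v e 0) $ i = 0" by simp
            then show "(H *\<^sub>v e m) $ i = (H *\<^sub>v e 0) $ i" by simp
          qed
        qed simp
      qed
      obtain m0 where m0: "m0 \<le> L" "e m0 \<noteq> 0\<^sub>v n"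
      proof -
        obtain c where c: "c < L * r" "x $ c \<noteq> 0"
        proof -
          have "\<exists>c < L * r. x $ c \<noteq> 0"
          proof (rule ccontr)
            assume "\<not> ?thesis"
            then have "x = 0\<^sub>v (L * r)" using x(1) by (intro eq_vecI) auto
            then show False using x(2) by simp
          qed
          then show ?thesis using that by blast
        qed
        then have "c < blk_off J (Suc L)" using Js by (simp add: blk_off_total)
        then obtain m where m: "m < Suc L" "blk_off J m \<le> c" "c < blk_off J (Suc m)"
          using find_block by blast
        define t where "t = c - blk_off J m"
        have t: "t < card (J m)" using m by (simp add: t_def blk_off_Suc)
        have Jm: "J m \<subseteq> {0..<n}" using Jsub m by simp
        have "e m $ (sorted_list_of_set (J m) ! t) = x $ c"
        proof -
          have "blk_off J m + t = c" using m by (simp add: t_def)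
          then show ?thesis using emb_nth(1)[OF Jm t, of "blk_off J m" x] by (simp add: e_def)
        qed
        moreover have "sorted_list_of_set (J m) ! t < n" using emb_nth(2)[OF Jm t] Jm by auto
        ultimately have "e m \<noteq> 0\<^sub>v n" using c by auto
        then show ?thesis using that m(1) by (simp add: less_Suc_eq_le)
      qed
      have wtJ: "hweight n (e m) \<le> card (J m)" if "m \<le> L" for m
        unfolding e_def using Jsub that by (simp add: hweight_emb)
      have wt: "hweight n (e m) \<le> r" if "m \<le> L" for m
      proof -
        have "hweight n (e m) \<le> card (J m)" unfolding e_def using Jsub that by (simp add: hweight_emb)
        moreover have "card (J m) \<le> r" using Jc that by simp
        ultimately show ?thesis by linarith
      qed
      have allnz: "\<forall>m\<le>L. e m \<noteq> 0\<^sub>v n"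
      proof (intro allI impI notI)
        fix m1 assume m1: "m1 \<le> L" "e m1 = 0\<^sub>v n"
        have "H *\<^sub>v e m1 = 0\<^sub>v r" using m1(2) Hc by auto
        then have "H *\<^sub>v e 0 = 0\<^sub>v r" using HE m1(1) by (metis order.refl)
        then have "H *\<^sub>v e m0 = 0\<^sub>v r" using HE m0(1) by metis
        then have "e m0 \<in> C" using inC ec by blast
        then have "r + 1 \<le> hweight n (e m0)" using code_weight[OF assms(5) _ m0(2)] r_def by simp
        then show False using wt[OF m0(1)] by simp
      qed
      have "\<exists>e :: nat \<Rightarrow> 'a vec.
          (\<forall>m\<le>L. e m \<in> carrier_vec n \<and> e m \<noteq> 0\<^sub>v n
                  \<and> hweight n (e m) \<le> min_dist n C - 1
                  \<and> e m - e 0 \<in> C)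
        \<and> (\<forall>m\<le>L. \<forall>m'\<le>L. m \<noteq> m' \<longrightarrow> supp n (e m) \<inter> supp n (e m') = {})
        \<and> real (\<Sum>m\<le>L. hweight n (e m)) \<le> real (L + 1) * (real L * real (n - k) / real (L + 1))"
      proof (intro exI[of _ e] conjI allI impI)
        fix m assume m: "m \<le> L"
        show "e m \<in> carrier_vec n" by (rule ec)
        show "e m \<noteq> 0\<^sub>v n" using allnz m by blast
        have "hweight n (e m) \<le> r" by (rule wt[OF m])
        then show "hweight n (e m) \<le> min_dist n C - 1" unfolding md by simp
        have "H *\<^sub>v (e m - e 0) = H *\<^sub>v e m - H *\<^sub>v e 0"
          by (rule mult_minus_distrib_mat_vec[OF Hc ec[of m] ec[of 0]])
        also have "\<dots> = 0\<^sub>v r"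
        proof -
          have h: "H *\<^sub>v e m = H *\<^sub>v e 0" using HE m by blast
          have "H *\<^sub>v e 0 \<in> carrier_vec r" using mult_mat_vec_carrier[OF Hc ec] .
          then show ?thesis unfolding h by (rule minus_cancel_vec)
        qed
        finally have Hz: "H *\<^sub>v (e m - e 0) = 0\<^sub>v r" .
        have "e m - e 0 \<in> carrier_vec n" using ec[of m] ec[of 0] by (rule minus_carrier_vec)
        then show "e m - e 0 \<in> C" using inC Hz by blast
      next
        fix m m' assume "m \<le> L" "m' \<le> L" "m \<noteq> m'"
        then show "supp n (e m) \<inter> supp n (e m') = {}"
        proof -
          have "supp n (e m) \<subseteq> J m" "supp n (e m') \<subseteq> J m'"
            unfolding e_def using supp_emb[of "J m" n] supp_emb[of "J m'" n] Jsub \<open>m \<le> L\<close> \<open>m' \<le> L\<close> by blast+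
          moreover have "J m \<inter> J m' = {}" using Jdis \<open>m \<le> L\<close> \<open>m' \<le> L\<close> \<open>m \<noteq> m'\<close> by blast
          ultimately show ?thesis by blast
        qed
      next
        have "(\<Sum>m\<le>L. hweight n (e m)) \<le> (\<Sum>m\<le>L. card (J m))"
          using wtJ by (intro sum_mono) simp
        then show "real (\<Sum>m\<le>L. hweight n (e m)) \<le> real (L + 1) * (real L * real (n - k) / real (L + 1))"
          using Js thr by linarith
      qed
      then show False using LM unfolding lightly_L_MDS_def lightly_list_decodable_def by blast
    qed
  next
    assume D: "\<forall>J :: nat \<Rightarrow> nat set.
       (\<forall>m\<le>L. J m \<subseteq> {0..<n})
     \<and> (\<forall>m\<le>L. \<forall>m'\<le>L. m \<noteq> m' \<longrightarrow> J m \<inter> J m' = {})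
     \<and> (\<forall>m\<le>L. card (J m) \<le> n - k)
     \<and> (\<Sum>m\<le>L. card (J m)) = L * (n - k)
     \<longrightarrow> det (M_mat H L J) \<noteq> 0"
    show "lightly_L_MDS n k C L"
      unfolding lightly_L_MDS_def lightly_list_decodable_def
    proof
      assume "\<exists>e :: nat \<Rightarrow> 'a vec.
          (\<forall>m\<le>L. e m \<in> carrier_vec n \<and> e m \<noteq> 0\<^sub>v n
                  \<and> hweight n (e m) \<le> min_dist n C - 1
                  \<and> e m - e 0 \<in> C)
        \<and> (\<forall>m\<le>L. \<forall>m'\<le>L. m \<noteq> m' \<longrightarrow> supp n (e m) \<inter> supp n (e m') = {})
        \<and> real (\<Sum>m\<le>L. hweight n (e m)) \<le> real (L + 1) * (real L * real (n - k) / real (L + 1))"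
      then obtain e :: "nat \<Rightarrow> 'a vec" where
        e1: "\<forall>m\<le>L. e m \<in> carrier_vec n \<and> e m \<noteq> 0\<^sub>v n
                  \<and> hweight n (e m) \<le> min_dist n C - 1 \<and> e m - e 0 \<in> C"
        and e2: "\<forall>m\<le>L. \<forall>m'\<le>L. m \<noteq> m' \<longrightarrow> supp n (e m) \<inter> supp n (e m') = {}"
        and e3: "real (\<Sum>m\<le>L. hweight n (e m)) \<le> real (L + 1) * (real L * real (n - k) / real (L + 1))"
        by blast
      have e3': "(\<Sum>m\<le>L. card (supp n (e m))) \<le> L * r"
        using e3 thr unfolding hweight_def by linarith
      have "(L + 1) * r = L * r + r" by simp
      obtain J where J1: "\<forall>m\<le>L. supp n (e m) \<subseteq> J m" and J2: "\<forall>m\<le>L. J m \<subseteq> {0..<n}"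
        and J3: "\<forall>m\<le>L. \<forall>m'\<le>L. m\<noteq>m' \<longrightarrow> J m \<inter> J m' = {}"
        and J4: "\<forall>m\<le>L. card (J m) \<le> r" and J5: "(\<Sum>m\<le>L. card (J m)) = L * r"
      proof -
        have p1: "\<forall>m\<le>L. supp n (e m) \<subseteq> {0..<n}" using supp_sub by blast
        have p3: "\<forall>m\<le>L. card (supp n (e m)) \<le> r" using e1 md unfolding hweight_def by simp
        have p6: "L * r \<le> (L+1)*r" by simp
        show ?thesis using extend[OF p1 e2 p3 e3' Lrn p6] that by blast
      qed
      have dn: "det (M_mat H L J) \<noteq> 0" using D J2 J3 J4 J5 by (simp add: r_def)
      define xv where "xv = gather L J e"
      have xvc: "xv \<in> carrier_vec (L * r)" using J5 by (simp add: xv_def gather_def blk_off_total)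
      have xvc': "xv \<in> carrier_vec (blk_off J (Suc L))" using J5 xvc by (simp add: blk_off_total)
      have eg: "emb n (J m) (blk_off J m) xv = e m" if "m \<le> L" for m
        using emb_gather[of m L J n e] that J1 J2 e1 by (simp add: xv_def)
      have HE: "H *\<^sub>v e m = H *\<^sub>v e 0" if m: "m \<le> L" for m
      proof -
        have ec: "e m \<in> carrier_vec n" "e 0 \<in> carrier_vec n" using e1 m by auto
        have "H *\<^sub>v e m - H *\<^sub>v e 0 = H *\<^sub>v (e m - e 0)"
          using mult_minus_distrib_mat_vec[OF Hc ec] by simp
        also have "\<dots> = 0\<^sub>v r" using inC[of "e m - e 0"] e1 m ec by simp
        finally have z: "H *\<^sub>v e m - H *\<^sub>v e 0 = 0\<^sub>v r" .
        show ?thesis by (rule vec_minus_eq0[OF mult_mat_vec_carrier[OF Hc ec(1)] mult_mat_vec_carrier[OF Hc ec(2)] z])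
      qed
      have Mx: "M_mat H L J *\<^sub>v xv = 0\<^sub>v (L * r)"
      proof (rule eq_vecI)
        show "dim_vec (M_mat H L J *\<^sub>v xv) = dim_vec (0\<^sub>v (L * r))" using Mc[OF J5] by simp
        fix a assume "a < dim_vec (0\<^sub>v (L * r))"
        then have aL: "a < L * r" by simp
        have mL: "a div r + 1 \<le> L" using aL r0 by (simp add: less_mult_imp_div_less Suc_le_eq)
        have "(M_mat H L J *\<^sub>v xv) $ a = (H *\<^sub>v e (a div r + 1)) $ (a mod r) - (H *\<^sub>v e 0) $ (a mod r)"
          using M_row[OF Hc r0 J2 xvc' aL] eg[OF mL] eg[of 0] by simp
        also have "\<dots> = 0" using HE[OF mL] by simp
        finally show "(M_mat H L J *\<^sub>v xv) $ a = 0\<^sub>v (L * r) $ a" using aL by simp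
      qed
      have xnz: "xv \<noteq> 0\<^sub>v (L * r)"
      proof
        assume xz: "xv = 0\<^sub>v (L * r)"
        have e0: "e 0 \<in> carrier_vec n" "e 0 \<noteq> 0\<^sub>v n" using e1 by auto
        obtain j where j: "j < n" "e 0 $ j \<noteq> 0"
        proof -
          have "\<exists>j < n. e 0 $ j \<noteq> 0"
          proof (rule ccontr)
            assume "\<not> ?thesis"
            then have "e 0 = 0\<^sub>v n" using e0(1) by (intro eq_vecI) auto
            then show False using e0(2) by simp
          qed
          then show ?thesis using that by blast
        qed
        then have jJ: "j \<in> J 0" using J1 by (auto simp: supp_def)
        have fJ: "finite (J 0)" using J2 finite_subset by blast
        have b: "bij_betw ((!) (sorted_list_of_set (J 0))) {..<card (J 0)} (J 0)" using bij_sl fJ by blast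
        then obtain t where t: "t < card (J 0)" "sorted_list_of_set (J 0) ! t = j"
          using jJ by (metis bij_betw_imp_surj_on imageE lessThan_iff)
        have "emb n (J 0) 0 xv $ j = xv $ t" using emb_nth(1)[of "J 0" n t 0 xv] J2 t by simp
        moreover have "card (J 0) \<le> L * r" using J5 member_le_sum[of 0 "{..L}" "\<lambda>m. card (J m)"] by simp
        ultimately have "emb n (J 0) 0 xv $ j = 0" using xz t by simp
        then show False using eg[of 0] j by simp
      qed
      show False using det_0_iff_vec_prod_zero_field[OF Mc[OF J5]] dn xvc xnz Mx by blast
    qed
  qed
qed

end
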